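(* Let $f:\mathbb{R}\times[0,1]\to\mathbb{R}$ be measurable, let $\mu_0\in\mathbb{R}$ be fixed, let $(\xi_t)_{t\ge 0}$ be independent random variables each uniformly distributed on $[0,1]$, and define $\mu_{t+1}=\mu_t+f(\mu_t,\xi_t)$ for $t\ge 0$. Let $F(\mu,x)=\mathbb{P}_{\xi\sim U([0,1])}(f(\mu,\xi)\le x)$. Assume that $F$ is continuous at $(\mu,0)$ for every $\mu\in\mathbb{R}$, and that there exists $\mu_\circ\in\mathbb{R}$ such that (1) $F(\mu,0)<1$ for all $\mu\ge\mu_\circ$, and (2) $F(\mu,0)>0$ for all $\mu\le\mu_\circ$. Then $\limsup_{t\to\infty}|\mu_t|=\infty$ almost surely.
   Context: $U([0,1])$ denotes the uniform distribution on $[0,1]$. The sequence $(\mu_t)$ models a user's interest in a fixed item over time; the conclusion is called weak degeneracy. *)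

theory Defs
  imports "HOL-Probability.Probability"
begin

primrec interest_seq ::
  "(real \<Rightarrow> real \<Rightarrow> real) \<Rightarrow> real \<Rightarrow> (nat \<Rightarrow> 'a \<Rightarrow> real) \<Rightarrow> nat \<Rightarrow> 'a \<Rightarrow> real" where
  "interest_seq f m0 \<xi> 0 \<omega> = m0"
| "interest_seq f m0 \<xi> (Suc t) \<omega> =
     interest_seq f m0 \<xi> t \<omega> + f (interest_seq f m0 \<xi> t \<omega>) (\<xi> t \<omega>)"

definition incr_cdf :: "(real \<Rightarrow> real \<Rightarrow> real) \<Rightarrow> real \<Rightarrow> real \<Rightarrow> real" where
  "incr_cdf f m x = measure (uniform_measure lborel {0..1::real}) {y \<in> {0..1}. f m y \<le> x}"

end

theory Submission
  imports Defs
begin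

lemma unif_bound:
  fixes g :: "real \<times> real \<Rightarrow> real" and S :: "real set"
  assumes S: "compact S" and cont: "\<And>m. m \<in> S \<Longrightarrow> isCont g (m,0)"
    and lt: "\<And>m. m \<in> S \<Longrightarrow> g (m,0) < 1"
  shows "\<exists>e>0. \<forall>m\<in>S. \<forall>x. \<bar>x\<bar> < e \<longrightarrow> g (m,x) < 1 - e"
proof (rule ccontr)
  assume "\<not> ?thesis"
  then have "\<forall>n::nat. \<exists>m x. m \<in> S \<and> \<bar>x\<bar> < 1/(Suc n) \<and> g (m,x) \<ge> 1 - 1/(Suc n)"
    by (metis (no_types, lifting) linorder_not_le of_nat_0_less_iff zero_less_Suc zero_less_divide_1_iff)
  then obtain mm xx where H: "\<And>n. mm n \<in> S \<and> \<bar>xx n\<bar> < 1/(Suc n) \<and> g (mm n, xx n) \<ge> 1 - 1/(Suc n)"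
    by metis
  from S have "seq_compact S" by (rule compact_imp_seq_compact)
  then obtain l r where l: "l \<in> S" and r: "strict_mono r" and lim: "(mm \<circ> r) \<longlonglongrightarrow> l"
    using H unfolding seq_compact_def by metis
  have inv: "(\<lambda>n. 1 / real (Suc (r n))) \<longlonglongrightarrow> 0"
  proof -
    have "(\<lambda>n. 1 / real (Suc n)) \<longlonglongrightarrow> 0" by (rule LIMSEQ_Suc[OF lim_inverse_n'])
    then show ?thesis using LIMSEQ_subseq_LIMSEQ[OF _ r] by (simp add: o_def)
  qed
  have x0: "(\<lambda>n. xx (r n)) \<longlonglongrightarrow> 0"
  proof (rule tendsto_sandwich[of "\<lambda>n. - (1 / real (Suc (r n)))" _ _ "\<lambda>n. 1 / real (Suc (r n))"])
    show "\<forall>\<^sub>F n in sequentially. - (1 / real (Suc (r n))) \<le> xx (r n)"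
      using H by (intro always_eventually allI) (smt (verit))
    show "\<forall>\<^sub>F n in sequentially. xx (r n) \<le> 1 / real (Suc (r n))"
      using H by (intro always_eventually allI) (smt (verit))
  qed (use inv tendsto_minus[OF inv] in auto)
  have "(\<lambda>n. (mm (r n), xx (r n))) \<longlonglongrightarrow> (l, 0)"
    using lim x0 by (intro tendsto_Pair) (auto simp: o_def)
  then have g1: "(\<lambda>n. g (mm (r n), xx (r n))) \<longlonglongrightarrow> g (l,0)"
    using cont[OF l] isCont_tendsto_compose by blast
  have g2: "(\<lambda>n. 1 - 1 / real (Suc (r n))) \<longlonglongrightarrow> 1"
    using tendsto_diff[OF tendsto_const inv, of 1] by simp
  have "1 \<le> g (l,0)"
    by (rule LIMSEQ_le[OF g2 g1]) (use H in auto)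
  with lt[OF l] show False by simp
qed

lemma iseq_meas_vec:
  fixes g :: "real \<Rightarrow> real \<Rightarrow> real"
  assumes g: "(\<lambda>p. g (fst p) (snd p)) \<in> borel_measurable borel"
    and I: "{..<t} \<subseteq> I"
  shows "(\<lambda>x. interest_seq g m0 (\<lambda>r x. x r) t x) \<in> borel_measurable (PiM I (\<lambda>_. borel))"
  using I
proof (induction t)
  case 0 then show ?case by simp
next
  case (Suc t)
  have "{..<t} \<subseteq> I" using Suc.prems by auto
  then have IH: "(\<lambda>x. interest_seq g m0 (\<lambda>r x. x r) t x) \<in> borel_measurable (PiM I (\<lambda>_. borel))"
    using Suc.IH by simp
  have tI: "t \<in> I" using Suc by auto
  have c: "(\<lambda>x. x t) \<in> borel_measurable (PiM I (\<lambda>_. borel))"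
    using tI by measurable
  have "(\<lambda>x. (interest_seq g m0 (\<lambda>r x. x r) t x, x t)) \<in> measurable (PiM I (\<lambda>_. borel)) (borel \<Otimes>\<^sub>M borel)"
    using IH c by measurable
  then have "(\<lambda>x. (interest_seq g m0 (\<lambda>r x. x r) t x, x t)) \<in> measurable (PiM I (\<lambda>_. borel)) borel"
    by (simp add: borel_prod)
  from measurable_comp[OF this g] have
    "(\<lambda>x. g (interest_seq g m0 (\<lambda>r x. x r) t x) (x t)) \<in> borel_measurable (PiM I (\<lambda>_. borel))"
    by (simp add: o_def)
  then show ?case using IH by simp
qed

lemma iseq_meas:
  fixes g :: "real \<Rightarrow> real \<Rightarrow> real"
  assumes g: "(\<lambda>p. g (fst p) (snd p)) \<in> borel_measurable borel"
    and xi: "\<And>t. \<xi> t \<in> borel_measurable M"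
  shows "(\<lambda>x. interest_seq g m0 \<xi> t x) \<in> borel_measurable M"
proof (induction t)
  case 0 then show ?case by simp
next
  case (Suc t)
  have "(\<lambda>x. (interest_seq g m0 \<xi> t x, \<xi> t x)) \<in> measurable M (borel \<Otimes>\<^sub>M borel)"
    using Suc xi[of t] by measurable
  then have "(\<lambda>x. (interest_seq g m0 \<xi> t x, \<xi> t x)) \<in> measurable M borel"
    by (simp add: borel_prod)
  from measurable_comp[OF this g] have
    "(\<lambda>x. g (interest_seq g m0 \<xi> t x) (\<xi> t x)) \<in> borel_measurable M"
    by (simp add: o_def)
  then show ?case using Suc by simp
qed

lemma iseq_vec_eq:
  assumes "{..<t} \<subseteq> I"
  shows "interest_seq g m0 \<xi> t \<omega> = interest_seq g m0 (\<lambda>r x. x r) t (\<lambda>i\<in>I. \<xi> i \<omega>)"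
  using assms
proof (induction t)
  case (Suc t)
  have "{..<t} \<subseteq> I" "t \<in> I" using Suc.prems by auto
  then show ?case using Suc.IH by simp
qed simp

lemma iseq_vec_cong:
  assumes "\<And>r. r < t \<Longrightarrow> x r = y r"
  shows "interest_seq g m0 (\<lambda>r x. x r) t x = interest_seq g m0 (\<lambda>r x. x r) t y"
  using assms by (induction t) auto

lemma one_step:
  fixes g :: "real \<Rightarrow> real \<Rightarrow> real" and C :: "(real \<times> real) set"
  assumes M: "prob_space M"
    and xi_rv: "\<And>t. \<xi> t \<in> borel_measurable M"
    and xi_indep: "prob_space.indep_vars M (\<lambda>_. borel) \<xi> UNIV"
    and xi_unif: "\<And>t. distr M borel (\<xi> t) = uniform_measure lborel {0..1}"
    and g: "(\<lambda>p. g (fst p) (snd p)) \<in> borel_measurable borel"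
    and C: "C \<in> sets borel"
    and Cp: "\<And>m. ennreal p \<le> emeasure (uniform_measure lborel {0..1::real}) {y. (m,y) \<in> C}"
    and D: "D \<in> sets (PiM {..<t} (\<lambda>_. borel))"
  shows "ennreal p * emeasure M {\<omega>\<in>space M. (\<lambda>i\<in>{..<t}. \<xi> i \<omega>) \<in> D}
     \<le> emeasure M {\<omega>\<in>space M. (\<lambda>i\<in>{..<t}. \<xi> i \<omega>) \<in> D \<and> (interest_seq g m0 \<xi> t \<omega>, \<xi> t \<omega>) \<in> C}"
proof -
  interpret prob_space M by (rule M)
  let ?S = "PiM {..<t} (\<lambda>_. borel) :: (nat \<Rightarrow> real) measure"
  let ?U = "uniform_measure lborel {0..1::real}"
  define V where "V = (\<lambda>\<omega>. \<lambda>i\<in>{..<t}. \<xi> i \<omega>)"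
  define \<Phi> where "\<Phi> = (\<lambda>x. interest_seq g m0 (\<lambda>r x. x r) t x)"
  have Phi[measurable]: "\<Phi> \<in> borel_measurable ?S"
    unfolding \<Phi>_def by (rule iseq_meas_vec[OF g]) auto
  have V[measurable]: "V \<in> measurable M ?S"
    unfolding V_def by (intro measurable_restrict xi_rv)
  have ind0: "indep_var ?S V (PiM {t} (\<lambda>_. borel)) (\<lambda>\<omega>. \<lambda>i\<in>{t}. \<xi> i \<omega>)"
    unfolding V_def by (rule indep_var_restrict[OF xi_indep]) auto
  define W where "W = (\<lambda>\<omega>. \<lambda>i\<in>{t}. \<xi> i \<omega>)"
  let ?T = "PiM {t} (\<lambda>_. borel) :: (nat \<Rightarrow> real) measure"
  have W[measurable]: "W \<in> measurable M ?T"
    unfolding W_def by (intro measurable_restrict xi_rv)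
  have dist: "distr M ?S V \<Otimes>\<^sub>M distr M ?T W = distr M (?S \<Otimes>\<^sub>M ?T) (\<lambda>x. (V x, W x))"
    using ind0 unfolding indep_var_distribution_eq W_def by simp
  define E where "E = {z \<in> space (?S \<Otimes>\<^sub>M ?T). fst z \<in> D \<and> (\<Phi> (fst z), snd z t) \<in> C}"
  have pm: "(\<lambda>z. (\<Phi> (fst z), snd z t)) \<in> measurable (?S \<Otimes>\<^sub>M ?T) borel"
  proof -
    have "(\<lambda>z. (\<Phi> (fst z), snd z t)) \<in> measurable (?S \<Otimes>\<^sub>M ?T) (borel \<Otimes>\<^sub>M borel)"
      by measurable
    then show ?thesis by (simp add: borel_prod)
  qed
  have E[measurable]: "E \<in> sets (?S \<Otimes>\<^sub>M ?T)"
  proof -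
    have "E = (fst -` D \<inter> space (?S \<Otimes>\<^sub>M ?T)) \<inter> ((\<lambda>z. (\<Phi> (fst z), snd z t)) -` C \<inter> space (?S \<Otimes>\<^sub>M ?T))"
      unfolding E_def by auto
    also have "\<dots> \<in> sets (?S \<Otimes>\<^sub>M ?T)"
      using D C pm by (intro sets.Int measurable_sets) auto
    finally show ?thesis .
  qed
  have seteq: "{\<omega>\<in>space M. (\<lambda>i\<in>{..<t}. \<xi> i \<omega>) \<in> D \<and> (interest_seq g m0 \<xi> t \<omega>, \<xi> t \<omega>) \<in> C}
      = (\<lambda>x. (V x, W x)) -` E \<inter> space M"
  proof -
    have "\<And>\<omega>. interest_seq g m0 \<xi> t \<omega> = \<Phi> (V \<omega>)"
      unfolding \<Phi>_def V_def by (rule iseq_vec_eq) auto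
    moreover have "\<And>\<omega>. \<omega> \<in> space M \<Longrightarrow> (V \<omega>, W \<omega>) \<in> space (?S \<Otimes>\<^sub>M ?T)"
      using measurable_space[OF V] measurable_space[OF W] by (auto simp: space_pair_measure)
    ultimately show ?thesis unfolding E_def V_def W_def by auto
  qed
  have "emeasure M ((\<lambda>x. (V x, W x)) -` E \<inter> space M)
      = emeasure (distr M (?S \<Otimes>\<^sub>M ?T) (\<lambda>x. (V x, W x))) E"
    by (subst emeasure_distr) (auto intro!: measurable_Pair)
  also have "\<dots> = emeasure (distr M ?S V \<Otimes>\<^sub>M distr M ?T W) E"
    by (simp add: dist)
  also have "\<dots> = (\<integral>\<^sup>+ v. emeasure (distr M ?T W) (Pair v -` E) \<partial>distr M ?S V)"
  proof (rule sigma_finite_measure.emeasure_pair_measure_alt)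
    show "sigma_finite_measure (distr M ?T W)"
      by (intro prob_space_imp_sigma_finite prob_space_distr) auto
    show "E \<in> sets (distr M ?S V \<Otimes>\<^sub>M distr M ?T W)"
      using E by (simp cong: sets_pair_measure_cong)
  qed
  also have "\<dots> \<ge> (\<integral>\<^sup>+ v. ennreal p * indicator D v \<partial>distr M ?S V)"
  proof (rule nn_integral_mono)
    fix v assume v: "v \<in> space (distr M ?S V)"
    show "ennreal p * indicator D v \<le> emeasure (distr M ?T W) (Pair v -` E)"
    proof (cases "v \<in> D")
      case True
      have pe: "Pair v -` E = (\<lambda>w. (\<Phi> v, w t)) -` C \<inter> space ?T"
        using v True unfolding E_def by (auto simp: space_pair_measure)
      have m1: "(\<lambda>w. (\<Phi> v, w t)) \<in> measurable ?T borel"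
      proof -
        have "(\<lambda>w. (\<Phi> v, w t)) \<in> measurable ?T (borel \<Otimes>\<^sub>M borel)" by measurable
        then show ?thesis by (simp add: borel_prod)
      qed
      have m2: "(\<lambda>y. (\<Phi> v, y)) \<in> measurable (borel::real measure) borel"
      proof -
        have "(\<lambda>y. (\<Phi> v, y)) \<in> measurable (borel::real measure) (borel \<Otimes>\<^sub>M borel)" by measurable
        then show ?thesis by (simp add: borel_prod)
      qed
      have "emeasure (distr M ?T W) (Pair v -` E) = emeasure M (W -` ((\<lambda>w. (\<Phi> v, w t)) -` C \<inter> space ?T) \<inter> space M)"
        unfolding pe using m1 C by (subst emeasure_distr) (auto intro!: measurable_sets)
      also have "\<dots> = emeasure M (\<xi> t -` ((\<lambda>y. (\<Phi> v, y)) -` C \<inter> space borel) \<inter> space M)"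
        using measurable_space[OF W] by (intro arg_cong[where f="emeasure M"]) (auto simp: W_def)
      also have "\<dots> = emeasure (distr M borel (\<xi> t)) ((\<lambda>y. (\<Phi> v, y)) -` C \<inter> space borel)"
        using measurable_sets[OF m2 C] xi_rv by (subst emeasure_distr) auto
      also have "\<dots> = emeasure ?U {y. (\<Phi> v, y) \<in> C}"
        unfolding xi_unif by (simp add: vimage_def)
      finally show ?thesis using True Cp[of "\<Phi> v"] by simp
    qed simp
  qed
  also have "(\<integral>\<^sup>+ v. ennreal p * indicator D v \<partial>distr M ?S V) = ennreal p * emeasure (distr M ?S V) D"
    using D by (simp add: nn_integral_cmult_indicator)
  also have "emeasure (distr M ?S V) D = emeasure M {\<omega>\<in>space M. (\<lambda>i\<in>{..<t}. \<xi> i \<omega>) \<in> D}"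
    using D V by (subst emeasure_distr) (auto simp: V_def intro!: arg_cong[where f="emeasure M"])
  finally show ?thesis unfolding seteq by simp
qed


lemma escape:
  fixes s y :: "nat \<Rightarrow> real" and g :: "real \<Rightarrow> real \<Rightarrow> real"
  assumes step: "\<And>r. s (Suc r) = s r + g (s r) (y r)"
    and good: "\<And>r. a \<le> r \<Longrightarrow> r < a + N \<Longrightarrow>
       K < \<bar>s r\<bar> \<or> (mc \<le> s r \<and> \<delta> < g (s r) (y r)) \<or> (s r < mc \<and> g (s r) (y r) \<le> -\<delta>)"
    and bnd: "\<And>r. r \<le> a + N \<Longrightarrow> \<bar>s r\<bar> \<le> K"
    and mc: "\<bar>mc\<bar> \<le> K" and N: "2*K < real N * \<delta>" and d: "\<delta> > 0"
  shows False
proof (cases "mc \<le> s a")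
  case True
  have "i \<le> N \<longrightarrow> s a + real i * \<delta> \<le> s (a+i)" for i
  proof (induction i)
    case (Suc i)
    show ?case
    proof
      assume i: "Suc i \<le> N"
      with Suc have IH: "s a + real i * \<delta> \<le> s (a+i)" by simp
      have "0 \<le> real i * \<delta>" using d by simp
      then have "mc \<le> s (a+i)" using IH True by linarith
      moreover have "\<bar>s (a+i)\<bar> \<le> K" using bnd i by simp
      ultimately have "\<delta> < g (s (a+i)) (y (a+i))" using good[of "a+i"] i by auto
      then show "s a + real (Suc i) * \<delta> \<le> s (a + Suc i)" using IH step[of "a+i"] by (simp add: algebra_simps)
    qed
  qed simp
  then have "s a + real N * \<delta> \<le> s (a+N)" by simp
  with bnd[of "a+N"] True mc N show False by linarith
next
  case False
  have "i \<le> N \<longrightarrow> s (a+i) \<le> s a - real i * \<delta>" for i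
  proof (induction i)
    case (Suc i)
    show ?case
    proof
      assume i: "Suc i \<le> N"
      with Suc have IH: "s (a+i) \<le> s a - real i * \<delta>" by simp
      have "0 \<le> real i * \<delta>" using d by simp
      then have "s (a+i) < mc" using IH False by linarith
      moreover have "\<bar>s (a+i)\<bar> \<le> K" using bnd i by simp
      ultimately have "g (s (a+i)) (y (a+i)) \<le> -\<delta>" using good[of "a+i"] i by auto
      then show "s (a + Suc i) \<le> s a - real (Suc i) * \<delta>" using IH step[of "a+i"] by (simp add: algebra_simps)
    qed
  qed simp
  then have "s (a+N) \<le> s a - real N * \<delta>" by simp
  with bnd[of "a+N"] False mc N show False by linarith
qed

lemma limsup_inf:
  fixes s :: "nat \<Rightarrow> real"
  assumes H: "\<And>k::nat. \<exists>r. real k < \<bar>s r\<bar>"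
  shows "limsup (\<lambda>t. ereal \<bar>s t\<bar>) = \<infinity>"
proof -
  have "(SUP m\<in>{n..}. ereal \<bar>s m\<bar>) = \<infinity>" for n
  proof -
    define B where "B = (\<Sum>m<n. \<bar>s m\<bar>)"
    have B: "m < n \<Longrightarrow> \<bar>s m\<bar> \<le> B" for m
      unfolding B_def by (rule member_le_sum) auto
    have "\<exists>m\<in>{n..}. c < ereal \<bar>s m\<bar>" if c: "c < \<infinity>" for c
    proof -
      obtain k :: nat where k: "max B (real_of_ereal c) < real k" using reals_Archimedean2 by blast
      obtain r where r: "real k < \<bar>s r\<bar>" using H by blast
      have "n \<le> r" proof (rule ccontr)
        assume "\<not> n \<le> r" then have "\<bar>s r\<bar> \<le> B" using B by simp
        then show False using k r by linarith
      qed
      moreover have "c < ereal \<bar>s r\<bar>"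
      proof (cases c)
        case (real x) then show ?thesis using k r by simp
      qed (use c in auto)
      ultimately show ?thesis by auto
    qed
    then have "\<forall>x<top. \<exists>i\<in>{n..}. x < ereal \<bar>s i\<bar>" by (simp add: top_ereal_def)
    then have "(SUP m\<in>{n..}. ereal \<bar>s m\<bar>) = top" by (subst SUP_eq_top_iff)
    then show ?thesis by (simp add: top_ereal_def)
  qed
  then show ?thesis by (simp add: limsup_INF_SUP)
qed


lemma bounded_null:
  fixes g :: "real \<Rightarrow> real \<Rightarrow> real" and C :: "(real \<times> real) set"
  assumes M: "prob_space M"
    and xi_rv: "\<And>t. \<xi> t \<in> borel_measurable M"
    and xi_indep: "prob_space.indep_vars M (\<lambda>_. borel) \<xi> UNIV"
    and xi_unif: "\<And>t. distr M borel (\<xi> t) = uniform_measure lborel {0..1}"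
    and g: "(\<lambda>p. g (fst p) (snd p)) \<in> borel_measurable borel"
    and C: "C \<in> sets borel"
    and Cp: "\<And>m. ennreal p \<le> emeasure (uniform_measure lborel {0..1::real}) {y. (m,y) \<in> C}"
    and p: "0 < p" "p \<le> 1"
    and esc: "\<And>\<omega> j. \<omega> \<in> space M \<Longrightarrow> (\<forall>r\<le>Suc j * N. \<bar>interest_seq g m0 \<xi> r \<omega>\<bar> \<le> K) \<Longrightarrow>
       (\<forall>r. j*N \<le> r \<and> r < j*N + N \<longrightarrow> (interest_seq g m0 \<xi> r \<omega>, \<xi> r \<omega>) \<in> C) \<Longrightarrow> False"
  shows "AE \<omega> in M. \<exists>r. K < \<bar>interest_seq g m0 \<xi> r \<omega>\<bar>"
proof -
  interpret prob_space M by (rule M)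
  define \<mu> where "\<mu> = (\<lambda>r \<omega>. interest_seq g m0 \<xi> r \<omega>)"
  have mu[measurable]: "\<mu> r \<in> borel_measurable M" for r
    unfolding \<mu>_def by (rule iseq_meas[OF g xi_rv])
  have pair[measurable]: "(\<lambda>\<omega>. (\<mu> r \<omega>, \<xi> r \<omega>)) \<in> measurable M borel" for r
  proof -
    have "(\<lambda>\<omega>. (\<mu> r \<omega>, \<xi> r \<omega>)) \<in> measurable M (borel \<Otimes>\<^sub>M borel)"
      using xi_rv[of r] by measurable
    then show ?thesis by (simp add: borel_prod)
  qed
  define A where "A = (\<lambda>j i. {\<omega>\<in>space M. (\<forall>r\<in>{..j*N}. \<bar>\<mu> r \<omega>\<bar> \<le> K) \<and>
      (\<forall>r\<in>{j*N..<j*N+i}. (\<mu> r \<omega>, \<xi> r \<omega>) \<in> C)})"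
  define Sv where "Sv = (\<lambda>n. {\<omega>\<in>space M. \<forall>r\<in>{..n}. \<bar>\<mu> r \<omega>\<bar> \<le> K})"
  have Asets: "A j i \<in> sets M" for j i
  proof -
    have "(\<lambda>\<omega>. (\<mu> r \<omega>, \<xi> r \<omega>)) -` C \<inter> space M \<in> sets M" for r
      using measurable_sets[OF pair C] .
    have pC: "(\<lambda>\<omega>. (\<mu> r \<omega>, \<xi> r \<omega>) \<in> C) \<in> measurable M (count_space (UNIV::bool set))" for r
      using pred_sets2[OF C pair[of r]] by simp
    have pK: "(\<lambda>\<omega>. \<bar>\<mu> r \<omega>\<bar> \<le> K) \<in> measurable M (count_space (UNIV::bool set))" for r by measurable
    have "(\<lambda>\<omega>. (\<forall>r\<in>{..j*N}. \<bar>\<mu> r \<omega>\<bar> \<le> K) \<and> (\<forall>r\<in>{j*N..<j*N+i}. (\<mu> r \<omega>, \<xi> r \<omega>) \<in> C)) \<in> measurable M (count_space (UNIV::bool set))"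
      by (intro pred_intros_logic pred_intros_finite pK pC) auto
    then show ?thesis unfolding A_def by (rule predE)
  qed
  have Ssets: "Sv n \<in> sets M" for n
  proof -
    have pK: "(\<lambda>\<omega>. \<bar>\<mu> r \<omega>\<bar> \<le> K) \<in> measurable M (count_space (UNIV::bool set))" for r by measurable
    have "(\<lambda>\<omega>. (\<forall>r\<in>{..n}. \<bar>\<mu> r \<omega>\<bar> \<le> K)) \<in> measurable M (count_space (UNIV::bool set))"
      by (intro pred_intros_finite pK) auto
    then show ?thesis unfolding Sv_def by (rule predE)
  qed
  have step: "p * measure M (A j i) \<le> measure M (A j (Suc i))" for j i
  proof -
    let ?t = "j*N+i"
    let ?S = "PiM {..<?t} (\<lambda>_. borel) :: (nat \<Rightarrow> real) measure"
    define \<Phi> where "\<Phi> = (\<lambda>r x. interest_seq g m0 (\<lambda>r x. x r) r x)"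
    define D where "D = {v\<in>space ?S. (\<forall>r\<in>{..j*N}. \<bar>\<Phi> r v\<bar> \<le> K) \<and>
      (\<forall>r\<in>{j*N..<j*N+i}. (\<Phi> r v, v r) \<in> C)}"
    have Dm: "D \<in> sets ?S"
    proof -
      have p1: "(\<lambda>v. \<bar>\<Phi> r v\<bar> \<le> K) \<in> measurable ?S (count_space (UNIV::bool set))" if "r \<in> {..j*N}" for r
      proof -
        have [measurable]: "\<Phi> r \<in> borel_measurable ?S"
          unfolding \<Phi>_def by (rule iseq_meas_vec[OF g]) (use that in auto)
        show ?thesis by measurable
      qed
      have p2: "(\<lambda>v. (\<Phi> r v, v r) \<in> C) \<in> measurable ?S (count_space (UNIV::bool set))" if "r \<in> {j*N..<j*N+i}" for r
      proof -
        have [measurable]: "\<Phi> r \<in> borel_measurable ?S"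
          unfolding \<Phi>_def by (rule iseq_meas_vec[OF g]) (use that in auto)
        have [measurable]: "(\<lambda>v. v r) \<in> borel_measurable ?S"
          using that by (intro measurable_component_singleton) auto
        have "(\<lambda>v. (\<Phi> r v, v r)) \<in> measurable ?S (borel \<Otimes>\<^sub>M borel)" by measurable
        then have pm: "(\<lambda>v. (\<Phi> r v, v r)) \<in> measurable ?S borel" by (simp add: borel_prod)
        show ?thesis using pred_sets2[OF C pm] by simp
      qed
      have "(\<lambda>v. (\<forall>r\<in>{..j*N}. \<bar>\<Phi> r v\<bar> \<le> K) \<and> (\<forall>r\<in>{j*N..<j*N+i}. (\<Phi> r v, v r) \<in> C)) \<in> measurable ?S (count_space (UNIV::bool set))"
        by (intro pred_intros_logic pred_intros_finite p1 p2) auto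
      then show ?thesis unfolding D_def by (rule predE)
    qed
    have conv: "\<Phi> r (\<lambda>i\<in>{..<?t}. \<xi> i \<omega>) = \<mu> r \<omega>" if "r \<le> ?t" for r \<omega>
      unfolding \<Phi>_def \<mu>_def by (rule iseq_vec_eq[symmetric]) (use that in auto)
    have inS: "\<omega> \<in> space M \<Longrightarrow> (\<lambda>i\<in>{..<?t}. \<xi> i \<omega>) \<in> space ?S" for \<omega>
      using measurable_space[OF measurable_restrict[of "{..<?t}" \<xi> M "\<lambda>_. borel"]] xi_rv by auto
    have key: "((\<lambda>i\<in>{..<?t}. \<xi> i \<omega>) \<in> D) = ((\<forall>r\<in>{..j*N}. \<bar>\<mu> r \<omega>\<bar> \<le> K) \<and>
        (\<forall>r\<in>{j*N..<j*N+i}. (\<mu> r \<omega>, \<xi> r \<omega>) \<in> C))" if w: "\<omega> \<in> space M" for \<omega>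
    proof -
      have c1: "(\<forall>r\<in>{..j*N}. \<bar>\<Phi> r (\<lambda>i\<in>{..<?t}. \<xi> i \<omega>)\<bar> \<le> K) = (\<forall>r\<in>{..j*N}. \<bar>\<mu> r \<omega>\<bar> \<le> K)"
      proof (rule ball_cong)
        fix r assume "r \<in> {..j*N}"
        then have "r \<le> ?t" by simp
        then show "(\<bar>\<Phi> r (\<lambda>i\<in>{..<?t}. \<xi> i \<omega>)\<bar> \<le> K) = (\<bar>\<mu> r \<omega>\<bar> \<le> K)" by (simp only: conv)
      qed simp
      have c2: "(\<forall>r\<in>{j*N..<j*N+i}. (\<Phi> r (\<lambda>i\<in>{..<?t}. \<xi> i \<omega>), (\<lambda>i\<in>{..<?t}. \<xi> i \<omega>) r) \<in> C)
           = (\<forall>r\<in>{j*N..<j*N+i}. (\<mu> r \<omega>, \<xi> r \<omega>) \<in> C)"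
      proof (rule ball_cong)
        fix r assume "r \<in> {j*N..<j*N+i}"
        then have r: "r \<le> ?t" "r \<in> {..<?t}" by auto
        then show "((\<Phi> r (\<lambda>i\<in>{..<?t}. \<xi> i \<omega>), (\<lambda>i\<in>{..<?t}. \<xi> i \<omega>) r) \<in> C) = ((\<mu> r \<omega>, \<xi> r \<omega>) \<in> C)"
          by (simp only: conv restrict_apply' r(2))
      qed simp
      show ?thesis unfolding D_def using inS[OF w] c1 c2 by simp
    qed
    have e1: "{\<omega>\<in>space M. (\<lambda>i\<in>{..<?t}. \<xi> i \<omega>) \<in> D} = A j i"
      unfolding A_def using key by blast
    have e2: "{\<omega>\<in>space M. (\<lambda>i\<in>{..<?t}. \<xi> i \<omega>) \<in> D \<and> (interest_seq g m0 \<xi> ?t \<omega>, \<xi> ?t \<omega>) \<in> C} = A j (Suc i)"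
    proof -
      have ins: "{j*N..<j*N+Suc i} = insert ?t {j*N..<j*N+i}" by auto
      show ?thesis
        unfolding A_def ins using key unfolding \<mu>_def by auto
    qed
    have "ennreal p * emeasure M (A j i) \<le> emeasure M (A j (Suc i))"
      using one_step[OF M xi_rv xi_indep xi_unif g C Cp Dm, of m0] unfolding e1 e2 .
    then have "ennreal (p * measure M (A j i)) \<le> ennreal (measure M (A j (Suc i)))"
      using p by (simp add: emeasure_eq_measure ennreal_mult)
    then show ?thesis by (simp add: ennreal_le_iff)
  qed
  have pow: "p ^ i * measure M (A j 0) \<le> measure M (A j i)" for j i
  proof (induction i)
    case (Suc i)
    have "p ^ Suc i * measure M (A j 0) = p * (p ^ i * measure M (A j 0))" by simp
    also have "\<dots> \<le> p * measure M (A j i)" using Suc p by (intro mult_left_mono) auto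
    also have "\<dots> \<le> measure M (A j (Suc i))" by (rule step)
    finally show ?case .
  qed simp
  define q where "q = p ^ N"
  have q: "0 < q" "q \<le> 1" unfolding q_def using p by (auto intro: power_le_one)
  have A0: "A j 0 = Sv (j*N)" for j unfolding A_def Sv_def by auto
  have dec: "measure M (Sv (Suc j * N)) \<le> (1 - q) * measure M (Sv (j*N))" for j
  proof -
    have sub: "Sv (Suc j * N) \<subseteq> Sv (j*N) - A j N"
    proof
      fix \<omega> assume w: "\<omega> \<in> Sv (Suc j * N)"
      then have "\<omega> \<in> Sv (j*N)" unfolding Sv_def by auto
      moreover have "\<omega> \<notin> A j N"
      proof
        assume "\<omega> \<in> A j N"
        then have h2: "\<forall>r. j*N \<le> r \<and> r < j*N + N \<longrightarrow> (\<mu> r \<omega>, \<xi> r \<omega>) \<in> C" and wM: "\<omega> \<in> space M"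
          unfolding A_def by auto
        from w have h1: "\<forall>r\<le>Suc j * N. \<bar>\<mu> r \<omega>\<bar> \<le> K" unfolding Sv_def by auto
        show False using esc[OF wM] h1 h2 unfolding \<mu>_def by blast
      qed
      ultimately show "\<omega> \<in> Sv (j*N) - A j N" by simp
    qed
    have AS: "A j N \<subseteq> Sv (j*N)" unfolding A_def Sv_def by auto
    have "measure M (Sv (Suc j * N)) \<le> measure M (Sv (j*N) - A j N)"
      using sub Ssets Asets by (intro finite_measure_mono) auto
    also have "\<dots> = measure M (Sv (j*N)) - measure M (A j N)"
      using AS Ssets Asets by (intro finite_measure_Diff) auto
    also have "\<dots> \<le> measure M (Sv (j*N)) - q * measure M (Sv (j*N))"
      using pow[of N j] A0[of j] unfolding q_def by simp
    finally show ?thesis by (simp add: algebra_simps)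
  qed
  have geo: "measure M (Sv (j*N)) \<le> (1 - q) ^ j" for j
  proof (induction j)
    case 0 then show ?case by simp
  next
    case (Suc j)
    have "measure M (Sv (Suc j * N)) \<le> (1 - q) * measure M (Sv (j*N))" by (rule dec)
    also have "\<dots> \<le> (1 - q) * (1 - q) ^ j" using Suc q by (intro mult_left_mono) auto
    finally show ?case by simp
  qed
  define Bad where "Bad = {\<omega>\<in>space M. \<forall>r. \<bar>\<mu> r \<omega>\<bar> \<le> K}"
  have Bsets: "Bad \<in> sets M"
  proof -
    have pK: "(\<lambda>\<omega>. \<bar>\<mu> r \<omega>\<bar> \<le> K) \<in> measurable M (count_space (UNIV::bool set))" for r by measurable
    have "(\<lambda>\<omega>. (\<forall>r. \<bar>\<mu> r \<omega>\<bar> \<le> K)) \<in> measurable M (count_space (UNIV::bool set))"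
      by (rule pred_intros_countable(1)[where P="\<lambda>\<omega> r. \<bar>\<mu> r \<omega>\<bar> \<le> K"]) (rule pK)
    then show ?thesis unfolding Bad_def by (rule predE)
  qed
  have Bj: "measure M Bad \<le> (1 - q) ^ j" for j
  proof -
    have "Bad \<subseteq> Sv (j*N)" unfolding Bad_def Sv_def by auto
    then have "measure M Bad \<le> measure M (Sv (j*N))"
      using Ssets by (intro finite_measure_mono) auto
    with geo[of j] show ?thesis by simp
  qed
  have "measure M Bad = 0"
  proof (rule ccontr)
    assume "measure M Bad \<noteq> 0"
    then have "0 < measure M Bad" by (simp add: zero_less_measure_iff)
    from real_arch_pow_inv[OF this, of "1 - q"] q obtain n where "(1 - q) ^ n < measure M Bad" by auto
    with Bj[of n] show False by simp
  qed
  then have "Bad \<in> null_sets M" using Bsets by (simp add: emeasure_eq_measure null_sets_def)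
  then show ?thesis
    by (rule AE_I') (auto simp: Bad_def \<mu>_def not_less)
qed


lemma clamp_meas:
  fixes f :: "real \<Rightarrow> real \<Rightarrow> real"
  assumes f_meas: "(\<lambda>p. f (fst p) (snd p)) \<in> borel_measurable
                   (restrict_space (borel :: (real \<times> real) measure) (UNIV \<times> {0..1}))"
  shows "(\<lambda>p. f (fst p) (max 0 (min 1 (snd p)))) \<in> borel_measurable (borel :: (real \<times> real) measure)"
proof -
  have h: "(\<lambda>p::real\<times>real. (fst p, max 0 (min 1 (snd p)))) \<in> measurable borel (restrict_space borel (UNIV \<times> {0..1}))"
  proof (rule measurable_restrict_space2)
    have "(\<lambda>p::real\<times>real. (fst p, max 0 (min 1 (snd p)))) \<in> measurable (borel \<Otimes>\<^sub>M borel) (borel \<Otimes>\<^sub>M borel)"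
      by measurable
    then show "(\<lambda>p::real\<times>real. (fst p, max 0 (min 1 (snd p)))) \<in> measurable borel borel"
      by (simp add: borel_prod)
  qed auto
  from measurable_comp[OF h f_meas] show ?thesis by (simp add: o_def)
qed

lemma cdf_facts:
  fixes f :: "real \<Rightarrow> real \<Rightarrow> real"
  assumes g: "(\<lambda>p. f (fst p) (max 0 (min 1 (snd p)))) \<in> borel_measurable (borel :: (real \<times> real) measure)"
  shows "emeasure (uniform_measure lborel {0..1::real}) {y. f m (max 0 (min 1 y)) \<le> x} = ennreal (incr_cdf f m x)"
    and "emeasure (uniform_measure lborel {0..1::real}) {y. x < f m (max 0 (min 1 y))} = ennreal (1 - incr_cdf f m x)"
proof -
  let ?U = "uniform_measure lborel {0..1::real}"
  have U: "prob_space ?U" by (intro prob_space_uniform_measure) auto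
  interpret U: prob_space ?U by (rule U)
  have gm: "(\<lambda>y. f m (max 0 (min 1 y))) \<in> borel_measurable (borel::real measure)"
  proof -
    have "(\<lambda>y::real. (m, y)) \<in> measurable borel (borel \<Otimes>\<^sub>M borel)" by measurable
    then have "(\<lambda>y::real. (m, y)) \<in> measurable borel borel" by (simp add: borel_prod)
    from measurable_comp[OF this g] show ?thesis by (simp add: o_def)
  qed
  have B: "{y. f m (max 0 (min 1 y)) \<le> x} \<in> sets borel"
    using measurable_sets[OF gm, of "{..x}"] by (simp add: vimage_def)
  have B2: "{y \<in> {0..1}. f m y \<le> x} \<in> sets borel"
  proof -
    have "{y \<in> {0..1}. f m y \<le> x} = {0..1} \<inter> {y. f m (max 0 (min 1 y)) \<le> x}" by auto
    then show ?thesis using B by auto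
  qed
  have eq: "{0..1} \<inter> {y \<in> {0..1::real}. f m y \<le> x} = {0..1} \<inter> {y. f m (max 0 (min 1 y)) \<le> x}" by auto
  have m1: "measure ?U {y. f m (max 0 (min 1 y)) \<le> x} = incr_cdf f m x"
  proof -
    have a: "measure ?U {y. f m (max 0 (min 1 y)) \<le> x} = measure lborel ({0..1} \<inter> {y. f m (max 0 (min 1 y)) \<le> x}) / measure lborel {0..1::real}"
      by (rule measure_uniform_measure) (use B in auto)
    have b: "measure ?U {y \<in> {0..1}. f m y \<le> x} = measure lborel ({0..1} \<inter> {y \<in> {0..1::real}. f m y \<le> x}) / measure lborel {0..1::real}"
      by (rule measure_uniform_measure) (use B2 in auto)
    show ?thesis unfolding incr_cdf_def a b eq ..
  qed
  then show e1: "emeasure ?U {y. f m (max 0 (min 1 y)) \<le> x} = ennreal (incr_cdf f m x)"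
    using U.emeasure_eq_measure by simp
  have "{y. x < f m (max 0 (min 1 y))} = space ?U - {y. f m (max 0 (min 1 y)) \<le> x}" by auto
  then have "measure ?U {y. x < f m (max 0 (min 1 y))} = 1 - incr_cdf f m x"
    using U.prob_compl[ of "{y. f m (max 0 (min 1 y)) \<le> x}"] B m1 by simp
  then show "emeasure ?U {y. x < f m (max 0 (min 1 y))} = ennreal (1 - incr_cdf f m x)"
    using U.emeasure_eq_measure by simp
qed


lemma iseq_clamp_eq:
  assumes "\<And>t. \<xi> t \<omega> \<in> {0..1::real}"
  shows "interest_seq f m0 \<xi> t \<omega> = interest_seq (\<lambda>m y. f m (max 0 (min 1 y))) m0 \<xi> t \<omega>"
proof (induction t)
  case (Suc t)
  have "max 0 (min 1 (\<xi> t \<omega>)) = \<xi> t \<omega>" using assms[of t] by auto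
  then show ?case using Suc by simp
qed simp

theorem theorem1:
  fixes M :: "'a measure" and f :: "real \<Rightarrow> real \<Rightarrow> real"
    and m0 :: real and \<xi> :: "nat \<Rightarrow> 'a \<Rightarrow> real"
  assumes "prob_space M"
    and f_meas: "(\<lambda>p. f (fst p) (snd p)) \<in> borel_measurable
                   (restrict_space (borel :: (real \<times> real) measure) (UNIV \<times> {0..1}))"
    and xi_rv: "\<And>t. \<xi> t \<in> borel_measurable M"
    and xi_indep: "prob_space.indep_vars M (\<lambda>_. borel) \<xi> UNIV"
    and xi_unif: "\<And>t. distr M borel (\<xi> t) = uniform_measure lborel {0..1}"
    and F_cont: "\<And>m. isCont (\<lambda>p. incr_cdf f (fst p) (snd p)) (m, 0)"
    and cond: "\<exists>mc. (\<forall>m\<ge>mc. incr_cdf f m 0 < 1) \<and> (\<forall>m\<le>mc. incr_cdf f m 0 > 0)"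
  shows "AE \<omega> in M. limsup (\<lambda>t. ereal \<bar>interest_seq f m0 \<xi> t \<omega>\<bar>) = \<infinity>"
proof -
  interpret prob_space M by (rule assms(1))
  define g where "g = (\<lambda>m y. f m (max 0 (min 1 y)))"
  have gm: "(\<lambda>p. g (fst p) (snd p)) \<in> borel_measurable borel"
    unfolding g_def by (rule clamp_meas[OF f_meas])
  have gm2[measurable]: "(\<lambda>p. g (fst p) (snd p)) \<in> borel_measurable (borel \<Otimes>\<^sub>M borel)"
    using gm by (simp add: borel_prod)
  obtain mc where mc1: "\<And>m. m \<ge> mc \<Longrightarrow> incr_cdf f m 0 < 1" and mc2: "\<And>m. m \<le> mc \<Longrightarrow> incr_cdf f m 0 > 0"
    using cond by blast
  let ?U = "uniform_measure lborel {0..1::real}"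
  have U: "prob_space ?U" by (intro prob_space_uniform_measure) auto
  have main: "AE \<omega> in M. \<exists>r. real k < \<bar>interest_seq g m0 \<xi> r \<omega>\<bar>" for k :: nat
  proof -
    define K where "K = \<bar>mc\<bar> + real k + 1"
    obtain e1 where e1: "e1 > 0" "\<And>m x. m \<in> {mc..K} \<Longrightarrow> \<bar>x\<bar> < e1 \<Longrightarrow> incr_cdf f m x < 1 - e1"
      using unif_bound[of "{mc..K}" "\<lambda>p. incr_cdf f (fst p) (snd p)"] F_cont mc1 by auto
    have c2: "isCont (\<lambda>p. 1 - incr_cdf f (fst p) (- snd p)) (m, 0)" for m
    proof -
      have "isCont (\<lambda>p::real\<times>real. (fst p, - snd p)) (m, 0)" by (intro continuous_intros)
      moreover have "isCont (\<lambda>p. incr_cdf f (fst p) (snd p)) ((\<lambda>p::real\<times>real. (fst p, - snd p)) (m, 0))"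
        using F_cont[of m] by simp
      ultimately have "isCont (\<lambda>p. incr_cdf f (fst ((\<lambda>p::real\<times>real. (fst p, - snd p)) p)) (snd ((\<lambda>p::real\<times>real. (fst p, - snd p)) p))) (m, 0)"
        by (rule isCont_o2)
      then show ?thesis by (intro continuous_intros) simp
    qed
    obtain e2 where e2: "e2 > 0" "\<And>m x. m \<in> {-K..mc} \<Longrightarrow> \<bar>x\<bar> < e2 \<Longrightarrow> 1 - incr_cdf f m (- x) < 1 - e2"
      using unif_bound[of "{-K..mc}" "\<lambda>p. 1 - incr_cdf f (fst p) (- snd p)"] c2 mc2 by auto
    define e where "e = min (min e1 e2) (1/2)"
    define \<delta> where "\<delta> = e / 2"
    have e: "0 < e" "e \<le> e1" "e \<le> e2" "e \<le> 1" unfolding e_def using e1 e2 by auto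
    have d: "0 < \<delta>" "\<bar>\<delta>\<bar> < e1" "\<bar>\<delta>\<bar> < e2" unfolding \<delta>_def using e by auto
    define C where "C = {z::real\<times>real. K < \<bar>fst z\<bar> \<or> (mc \<le> fst z \<and> \<delta> < g (fst z) (snd z)) \<or>
       (fst z < mc \<and> g (fst z) (snd z) \<le> - \<delta>)}"
    have Cs: "C \<in> sets borel"
    proof -
      have "{z \<in> space (borel \<Otimes>\<^sub>M borel). K < \<bar>fst z\<bar> \<or> (mc \<le> fst z \<and> \<delta> < g (fst z) (snd z)) \<or>
       (fst z < mc \<and> g (fst z) (snd z) \<le> - \<delta>)} \<in> sets (borel \<Otimes>\<^sub>M (borel::real measure))"
        by measurable
      then have "C \<in> sets (borel \<Otimes>\<^sub>M (borel::real measure))" unfolding C_def by (simp add: space_pair_measure)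
      then show ?thesis by (simp only: borel_prod)
    qed
    have Cp: "ennreal e \<le> emeasure ?U {y. (m,y) \<in> C}" for m
    proof (cases "K < \<bar>m\<bar>")
      case True
      then have "{y. (m,y) \<in> C} = space ?U" unfolding C_def by auto
      then show ?thesis using prob_space.emeasure_space_1[OF U] e by simp
    next
      case False
      show ?thesis
      proof (cases "mc \<le> m")
        case True
        then have "{y. (m,y) \<in> C} = {y. \<delta> < f m (max 0 (min 1 y))}" using False unfolding C_def g_def by auto
        moreover have "emeasure ?U {y. \<delta> < f m (max 0 (min 1 y))} = ennreal (1 - incr_cdf f m \<delta>)"
          by (rule cdf_facts(2)[OF gm[unfolded g_def]])
        moreover have "incr_cdf f m \<delta> < 1 - e1" using e1(2)[of m \<delta>] True False d by auto
        ultimately show ?thesis using e by (auto intro!: ennreal_leI)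
      next
        case mlt: False
        then have "{y. (m,y) \<in> C} = {y. f m (max 0 (min 1 y)) \<le> - \<delta>}" using False unfolding C_def g_def by auto
        moreover have "emeasure ?U {y. f m (max 0 (min 1 y)) \<le> - \<delta>} = ennreal (incr_cdf f m (- \<delta>))"
          by (rule cdf_facts(1)[OF gm[unfolded g_def]])
        moreover have "1 - incr_cdf f m (- \<delta>) < 1 - e2" using e2(2)[of m \<delta>] mlt False d by auto
        ultimately show ?thesis using e by (auto intro!: ennreal_leI)
      qed
    qed
    define N where "N = nat \<lceil>2 * K / \<delta>\<rceil> + 1"
    have NK: "2 * K < real N * \<delta>"
    proof -
      have "2 * K / \<delta> < real N" unfolding N_def by linarith
      then show ?thesis using d(1) by (simp add: field_simps)
    qed
    have esc: False if w: "\<omega> \<in> space M" and h1: "\<forall>r\<le>Suc j * N. \<bar>interest_seq g m0 \<xi> r \<omega>\<bar> \<le> K"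
      and h2: "\<forall>r. j*N \<le> r \<and> r < j*N + N \<longrightarrow> (interest_seq g m0 \<xi> r \<omega>, \<xi> r \<omega>) \<in> C" for \<omega> j
    proof (rule escape[where s="\<lambda>r. interest_seq g m0 \<xi> r \<omega>" and y="\<lambda>r. \<xi> r \<omega>" and g=g
          and a="j*N" and N=N and K=K and mc=mc and \<delta>=\<delta>])
      show "\<And>r. interest_seq g m0 \<xi> (Suc r) \<omega> = interest_seq g m0 \<xi> r \<omega> + g (interest_seq g m0 \<xi> r \<omega>) (\<xi> r \<omega>)"
        by simp
      show "\<And>r. j * N \<le> r \<Longrightarrow> r < j * N + N \<Longrightarrow> K < \<bar>interest_seq g m0 \<xi> r \<omega>\<bar> \<or>
          mc \<le> interest_seq g m0 \<xi> r \<omega> \<and> \<delta> < g (interest_seq g m0 \<xi> r \<omega>) (\<xi> r \<omega>) \<or>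
          interest_seq g m0 \<xi> r \<omega> < mc \<and> g (interest_seq g m0 \<xi> r \<omega>) (\<xi> r \<omega>) \<le> - \<delta>"
        using h2 unfolding C_def by auto
      show "\<And>r. r \<le> j * N + N \<Longrightarrow> \<bar>interest_seq g m0 \<xi> r \<omega>\<bar> \<le> K"
        using h1 by (simp add: add.commute)
      show "\<bar>mc\<bar> \<le> K" unfolding K_def by simp
    qed (use NK d in auto)
    have "AE \<omega> in M. \<exists>r. K < \<bar>interest_seq g m0 \<xi> r \<omega>\<bar>"
      by (rule bounded_null[OF assms(1) xi_rv xi_indep xi_unif gm Cs Cp e(1) e(4) esc])
    then show ?thesis
    proof eventually_elim
      case (elim \<omega>)
      then obtain r where "K < \<bar>interest_seq g m0 \<xi> r \<omega>\<bar>" by blast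
      moreover have "real k \<le> K" unfolding K_def by simp
      ultimately show ?case by (intro exI[of _ r]) linarith
    qed
  qed
  have AEk: "AE \<omega> in M. \<forall>k::nat. \<exists>r. real k < \<bar>interest_seq g m0 \<xi> r \<omega>\<bar>"
    using main by (simp add: AE_all_countable)
  have AE01: "AE \<omega> in M. \<forall>t. \<xi> t \<omega> \<in> {0..1}"
  proof -
    have "AE \<omega> in M. \<xi> t \<omega> \<in> {0..1}" for t
    proof -
      have "AE x in ?U. x \<in> {0..1}"
        by (rule AE_uniform_measureI) auto
      then have "AE x in distr M borel (\<xi> t). x \<in> {0..1}" unfolding xi_unif .
      then show ?thesis using xi_rv[of t] by (subst (asm) AE_distr_iff) auto
    qed
    then show ?thesis by (simp add: AE_all_countable)
  qed
  from AEk AE01 show ?thesis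
  proof eventually_elim
    case (elim \<omega>)
    have "interest_seq f m0 \<xi> t \<omega> = interest_seq g m0 \<xi> t \<omega>" for t
      unfolding g_def by (rule iseq_clamp_eq) (use elim in auto)
    then show ?case using limsup_inf[of "\<lambda>t. interest_seq g m0 \<xi> t \<omega>"] elim by simp
  qed
qed

end
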